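(* For every integer $n\geq 4$, let $S_n$ be the star with $n$ vertices (one center adjacent to $n-1$ leaves). Then $\chi_L(S_n\odot\overline{K_1})=\lceil\sqrt{n}\rceil+1$.
   Context: All graphs are finite and simple. A $k$-coloring of a connected graph $G$ is a map $c:V(G)\to\{1,\dots,k\}$ with $c(u)\neq c(v)$ for adjacent $u,v$; it induces the partition $\Pi=\{C_1,\dots,C_k\}$ into color classes $C_i=c^{-1}(i)$. The color code of $v$ is $c_\Pi(v)=(d(v,C_1),\dots,d(v,C_k))$ with $d(v,C_i)=\min\{d(v,x): x\in C_i\}$ (graph distance). $c$ is a locating coloring if distinct vertices have distinct color codes; the locating-chromatic number $\chi_L(G)$ is the least $k$ for which a locating $k$-coloring exists. The corona product $G\odot H$ of a graph $G$ with vertex set $\{a_1,\dots,a_n\}$ and a graph $H$ is obtained from one copy of $G$ and $n$ disjoint copies of $H$ by joining $a_i$ to every vertex of the $i$-th copy of $H$. Thus $S_n\odot\overline{K_1}$ is the tree obtained from $S_n$ by attaching one new pendant vertex to each of its $n$ vertices. *)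

theory Defs
  imports Complex_Main
begin

text \<open>A (simple) graph is a vertex set together with a symmetric, irreflexive
adjacency relation (on that vertex set).\<close>
type_synonym 'a graph = "'a set \<times> ('a \<Rightarrow> 'a \<Rightarrow> bool)"

definition verts :: "'a graph \<Rightarrow> 'a set" where "verts G = fst G"
definition adj :: "'a graph \<Rightarrow> 'a \<Rightarrow> 'a \<Rightarrow> bool" where "adj G = snd G"

definition is_walk :: "'a graph \<Rightarrow> 'a list \<Rightarrow> bool" where
  "is_walk G xs \<longleftrightarrow> xs \<noteq> [] \<and> set xs \<subseteq> verts G \<and>
     (\<forall>i. Suc i < length xs \<longrightarrow> adj G (xs ! i) (xs ! Suc i))"

definition gdist :: "'a graph \<Rightarrow> 'a \<Rightarrow> 'a \<Rightarrow> nat" where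
  "gdist G u v = (LEAST k. \<exists>xs. is_walk G xs \<and> hd xs = u \<and> last xs = v \<and> length xs = Suc k)"

definition setdist :: "'a graph \<Rightarrow> 'a \<Rightarrow> 'a set \<Rightarrow> nat" where
  "setdist G v C = Min (gdist G v ` C)"

definition is_coloring :: "'a graph \<Rightarrow> nat \<Rightarrow> ('a \<Rightarrow> nat) \<Rightarrow> bool" where
  "is_coloring G k c \<longleftrightarrow> c ` verts G = {1..k} \<and>
     (\<forall>u\<in>verts G. \<forall>v\<in>verts G. adj G u v \<longrightarrow> c u \<noteq> c v)"

definition color_class :: "'a graph \<Rightarrow> ('a \<Rightarrow> nat) \<Rightarrow> nat \<Rightarrow> 'a set" where
  "color_class G c i = {x \<in> verts G. c x = i}"

definition color_code :: "'a graph \<Rightarrow> nat \<Rightarrow> ('a \<Rightarrow> nat) \<Rightarrow> 'a \<Rightarrow> nat list" where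
  "color_code G k c v = map (\<lambda>i. setdist G v (color_class G c i)) [1..<Suc k]"

definition locating_coloring :: "'a graph \<Rightarrow> nat \<Rightarrow> ('a \<Rightarrow> nat) \<Rightarrow> bool" where
  "locating_coloring G k c \<longleftrightarrow> is_coloring G k c \<and> inj_on (color_code G k c) (verts G)"

definition locating_chromatic_number :: "'a graph \<Rightarrow> nat" where
  "locating_chromatic_number G = (LEAST k. \<exists>c. locating_coloring G k c)"

text \<open>Corona product G \<odot> H: a copy of G plus, for each vertex a of G, a copy of H
(vertices (a,h)) all of whose vertices are joined to a.\<close>
definition corona :: "'a graph \<Rightarrow> 'b graph \<Rightarrow> ('a + ('a \<times> 'b)) graph" where
  "corona G H =
    (Inl ` verts G \<union> {Inr (a, h) | a h. a \<in> verts G \<and> h \<in> verts H},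
     (\<lambda>x y. case (x, y) of
        (Inl a, Inl b) \<Rightarrow> adj G a b
      | (Inr (a, h), Inr (b, h')) \<Rightarrow> a = b \<and> a \<in> verts G \<and> adj H h h'
      | (Inl a, Inr (b, h)) \<Rightarrow> a = b \<and> a \<in> verts G \<and> h \<in> verts H
      | (Inr (b, h), Inl a) \<Rightarrow> a = b \<and> a \<in> verts G \<and> h \<in> verts H))"

definition star :: "nat \<Rightarrow> nat graph" where
  "star n = ({0..<n}, (\<lambda>u v. u < n \<and> v < n \<and> ((u = 0 \<and> v \<noteq> 0) \<or> (v = 0 \<and> u \<noteq> 0))))"

definition compl_K1 :: "unit graph" where
  "compl_K1 = ({()}, (\<lambda>_ _. False))"

end

theory Submission
  imports Defs
begin


lemma is_walk_succ: "is_walk G xs \<longleftrightarrow> xs \<noteq> [] \<and> set xs \<subseteq> verts G \<and> successively (adj G) xs"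
  by (simp add: is_walk_def successively_conv_nth)

definition conn :: "'a graph \<Rightarrow> bool" where
  "conn G \<longleftrightarrow> (\<forall>u\<in>verts G. \<forall>w\<in>verts G. \<exists>xs. is_walk G xs \<and> hd xs = u \<and> last xs = w)"

lemma gdist_ex:
  assumes "conn G" "u \<in> verts G" "w \<in> verts G"
  shows "\<exists>xs. is_walk G xs \<and> hd xs = u \<and> last xs = w \<and> length xs = Suc (gdist G u w)"
proof -
  obtain xs where xs: "is_walk G xs" "hd xs = u" "last xs = w"
    using assms unfolding conn_def by blast
  then have "length xs = Suc (length xs - 1)" by (cases xs) (auto simp: is_walk_def)
  then have "\<exists>k. \<exists>xs. is_walk G xs \<and> hd xs = u \<and> last xs = w \<and> length xs = Suc k"
    using xs by blast
  from LeastI_ex[OF this] show ?thesis unfolding gdist_def .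
qed

lemma gdist_le:
  assumes "is_walk G xs" "hd xs = u" "last xs = w" "length xs = Suc k"
  shows "gdist G u w \<le> k"
  unfolding gdist_def by (rule Least_le) (use assms in blast)

lemma gdist_refl: "u \<in> verts G \<Longrightarrow> gdist G u u = 0"
  using gdist_le[of G "[u]" u u 0] by (simp add: is_walk_def)

lemma gdist_adj: "u \<in> verts G \<Longrightarrow> w \<in> verts G \<Longrightarrow> adj G u w \<Longrightarrow> gdist G u w \<le> 1"
  using gdist_le[of G "[u,w]" u w 1] by (simp add: is_walk_def nth_Cons split: nat.splits)

lemma gdist_le1:
  assumes "conn G" "u \<in> verts G" "w \<in> verts G" "gdist G u w \<le> 1"
  shows "u = w \<or> adj G u w"
proof -
  obtain xs where xs: "is_walk G xs" "hd xs = u" "last xs = w" "length xs = Suc (gdist G u w)"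
    using gdist_ex[OF assms(1-3)] by blast
  show ?thesis
  proof (cases "gdist G u w = 0")
    case True
    then obtain a where "xs = [a]" using xs(4) by (cases xs) auto
    then show ?thesis using xs by auto
  next
    case False
    then have "length xs = 2" using xs(4) assms(4) by simp
    then obtain a b where "xs = [a,b]" by (cases xs; cases "tl xs") auto
    then show ?thesis using xs by (auto simp: is_walk_succ)
  qed
qed

lemma gdist_0:
  assumes "conn G" "u \<in> verts G" "w \<in> verts G" "gdist G u w = 0"
  shows "u = w"
proof -
  obtain xs where xs: "is_walk G xs" "hd xs = u" "last xs = w" "length xs = Suc (gdist G u w)"
    using gdist_ex[OF assms(1-3)] by blast
  then obtain a where "xs = [a]" using assms(4) by (cases xs) auto
  then show ?thesis using xs by auto
qed

definition ghom :: "'a graph \<Rightarrow> ('a \<Rightarrow> 'a) \<Rightarrow> bool" where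
  "ghom G h \<longleftrightarrow> h ` verts G \<subseteq> verts G \<and> (\<forall>x\<in>verts G. \<forall>y\<in>verts G. adj G x y \<longrightarrow> adj G (h x) (h y))"

lemma gdist_hom:
  assumes "conn G" "ghom G h" "u \<in> verts G" "w \<in> verts G"
  shows "gdist G (h u) (h w) \<le> gdist G u w"
proof -
  obtain xs where xs: "is_walk G xs" "hd xs = u" "last xs = w" "length xs = Suc (gdist G u w)"
    using gdist_ex[OF assms(1,3,4)] by blast
  have ne: "xs \<noteq> []" and sv: "set xs \<subseteq> verts G" and sc: "successively (adj G) xs"
    using xs(1) by (auto simp: is_walk_succ)
  have "successively (adj G) (map h xs)"
    unfolding successively_map
    by (rule successively_mono[OF sc]) (use sv assms(2) in \<open>auto simp: ghom_def\<close>)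
  moreover have "set (map h xs) \<subseteq> verts G" using sv assms(2) by (auto simp: ghom_def)
  ultimately have "is_walk G (map h xs)" using ne by (simp add: is_walk_succ)
  moreover have "hd (map h xs) = h u" "last (map h xs) = h w"
    using ne xs by (auto simp: hd_map last_map)
  ultimately show ?thesis using gdist_le[of G "map h xs"] xs(4) by simp
qed

lemma setdist_attained:
  assumes "finite C" "C \<noteq> {}"
  shows "\<exists>w\<in>C. setdist G u C = gdist G u w"
proof -
  have "setdist G u C \<in> gdist G u ` C" unfolding setdist_def using assms by (intro Min_in) auto
  then show ?thesis by auto
qed

lemma setdist_le: "finite C \<Longrightarrow> w \<in> C \<Longrightarrow> setdist G u C \<le> gdist G u w"
  unfolding setdist_def by (rule Min_le) auto

lemma setdist_0_iff:
  assumes "conn G" "finite C" "C \<noteq> {}" "C \<subseteq> verts G" "u \<in> verts G"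
  shows "setdist G u C = 0 \<longleftrightarrow> u \<in> C"
proof
  assume "setdist G u C = 0"
  then obtain w where "w \<in> C" "gdist G u w = 0" using setdist_attained[OF assms(2,3)] by metis
  then show "u \<in> C" using gdist_0[OF assms(1,5)] assms(4) by auto
next
  assume "u \<in> C"
  then show "setdist G u C = 0" using setdist_le[OF assms(2) \<open>u\<in>C\<close>, of G u] gdist_refl[OF assms(5)] by simp
qed

lemma setdist_le1_iff:
  assumes "conn G" "finite C" "C \<noteq> {}" "C \<subseteq> verts G" "u \<in> verts G"
  shows "setdist G u C \<le> 1 \<longleftrightarrow> (\<exists>w\<in>C. w = u \<or> adj G u w)"
proof
  assume "setdist G u C \<le> 1"
  then obtain w where "w \<in> C" "gdist G u w \<le> 1" using setdist_attained[OF assms(2,3)] by metis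
  then show "\<exists>w\<in>C. w = u \<or> adj G u w" using gdist_le1[OF assms(1,5)] assms(4) by blast
next
  assume "\<exists>w\<in>C. w = u \<or> adj G u w"
  then obtain w where w: "w \<in> C" "w = u \<or> adj G u w" by blast
  then have "gdist G u w \<le> 1" using gdist_refl[OF assms(5)] gdist_adj[OF assms(5)] assms(4) by auto
  then show "setdist G u C \<le> 1" using setdist_le[OF assms(2) w(1), of G u] by simp
qed

lemma setdist_hom:
  assumes "conn G" "ghom G h" "finite C" "C \<noteq> {}" "C \<subseteq> verts G" "u \<in> verts G" "h ` C \<subseteq> C"
  shows "setdist G (h u) C \<le> setdist G u C"
proof -
  obtain w where w: "w \<in> C" "setdist G u C = gdist G u w" using setdist_attained[OF assms(3,4)] by blast
  have "h w \<in> C" using w(1) assms(7) by auto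
  then have "setdist G (h u) C \<le> gdist G (h u) (h w)" by (rule setdist_le[OF assms(3)])
  also have "\<dots> \<le> gdist G u w" using gdist_hom[OF assms(1,2,6)] w(1) assms(5) by auto
  finally show ?thesis using w(2) by simp
qed



lemma walk_conn_center:
  assumes sym: "\<And>x y. adj G x y \<Longrightarrow> adj G y x"
    and z: "\<And>v. v \<in> verts G \<Longrightarrow> \<exists>xs. is_walk G xs \<and> hd xs = z \<and> last xs = v"
  shows "conn G"
  unfolding conn_def
proof (intro ballI)
  fix u w assume u: "u \<in> verts G" and w: "w \<in> verts G"
  obtain xs where xs: "is_walk G xs" "hd xs = z" "last xs = u" using z[OF u] by blast
  obtain ys where ys: "is_walk G ys" "hd ys = z" "last ys = w" using z[OF w] by blast
  have sx: "successively (adj G) (rev xs)"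
    using xs(1) by (auto simp: is_walk_succ intro: successively_mono sym)
  show "\<exists>zs. is_walk G zs \<and> hd zs = u \<and> last zs = w"
  proof (cases ys)
    case Nil then show ?thesis using ys by (auto simp: is_walk_def)
  next
    case (Cons y ys')
    show ?thesis
    proof (cases ys')
      case Nil
      then show ?thesis using xs ys Cons sx by (intro exI[of _ "rev xs"]) (auto simp: is_walk_succ hd_rev last_rev)
    next
      case (Cons y' ys'')
      have "is_walk G (rev xs @ ys')"
        using xs ys sx \<open>ys = y # ys'\<close> Cons
        by (auto simp: is_walk_succ successively_append_iff last_rev)
      then show ?thesis using xs ys \<open>ys = y # ys'\<close> Cons
        by (intro exI[of _ "rev xs @ ys'"]) (auto simp: is_walk_succ hd_rev last_rev hd_append)
    qed
  qed
qed

lemma codes_eq: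
  assumes "conn G" "finite (verts G)" "is_coloring G k c"
    and "ghom G h1" "ghom G h2" "\<forall>x\<in>verts G. c (h1 x) = c x" "\<forall>x\<in>verts G. c (h2 x) = c x"
    and "h1 u = v" "h2 v = u" "u \<in> verts G" "v \<in> verts G"
  shows "color_code G k c u = color_code G k c v"
  unfolding color_code_def
proof (rule map_cong[OF refl])
  fix t assume "t \<in> set [1..<Suc k]"
  then have t: "t \<in> c ` verts G" using assms(3) by (auto simp: is_coloring_def)
  let ?C = "color_class G c t"
  have C: "finite ?C" "?C \<noteq> {}" "?C \<subseteq> verts G"
    using assms(2) t by (auto simp: color_class_def)
  have h1: "h1 ` ?C \<subseteq> ?C" and h2: "h2 ` ?C \<subseteq> ?C"
    using assms(4-7) by (auto simp: color_class_def ghom_def)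
  show "setdist G u ?C = setdist G v ?C"
    using setdist_hom[OF assms(1,4) C assms(10) h1] setdist_hom[OF assms(1,5) C assms(11) h2] assms(8,9)
    by simp
qed

lemma codes_eq_imp:
  assumes "conn G" "finite (verts G)" "is_coloring G k c" "u \<in> verts G" "v \<in> verts G"
    and "color_code G k c u = color_code G k c v"
  shows "c u = c v \<and> c ` {w\<in>verts G. w = u \<or> adj G u w} = c ` {w\<in>verts G. w = v \<or> adj G v w}"
proof -
  have eq: "setdist G u (color_class G c t) = setdist G v (color_class G c t)" if "t \<in> {1..k}" for t
  proof -
    have "t \<in> set [1..<Suc k]" using that by auto
    then show ?thesis using assms(6) unfolding color_code_def map_eq_conv by blast
  qed
  have C: "finite (color_class G c t)" "color_class G c t \<noteq> {}" "color_class G c t \<subseteq> verts G"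
    if "t \<in> {1..k}" for t
  proof -
    have "t \<in> c ` verts G" using assms(3) that by (auto simp: is_coloring_def)
    then show "finite (color_class G c t)" "color_class G c t \<noteq> {}" "color_class G c t \<subseteq> verts G"
      using assms(2) by (auto simp: color_class_def)
  qed
  have rng: "c w \<in> {1..k}" if "w \<in> verts G" for w using assms(3) that by (auto simp: is_coloring_def)
  have "c u \<in> {1..k}" using rng assms(4) by blast
  moreover have "u \<in> color_class G c (c u)" using assms(4) by (simp add: color_class_def)
  ultimately have "setdist G u (color_class G c (c u)) = 0"
    using setdist_0_iff[OF assms(1) C assms(4)] by blast
  then have "setdist G v (color_class G c (c u)) = 0"
    using eq[of "c u"] \<open>c u \<in> {1..k}\<close> by simp
  then have "v \<in> color_class G c (c u)"
    using setdist_0_iff[OF assms(1) C assms(5)] \<open>c u \<in> {1..k}\<close> by blast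
  then have cuv: "c u = c v" by (simp add: color_class_def)
  have N: "c ` {w\<in>verts G. w = x \<or> adj G x w} = {t\<in>{1..k}. setdist G x (color_class G c t) \<le> 1}"
    if x: "x \<in> verts G" for x
  proof (rule set_eqI, rule iffI)
    fix t assume "t \<in> c ` {w\<in>verts G. w = x \<or> adj G x w}"
    then obtain w where w: "w \<in> verts G" "w = x \<or> adj G x w" "t = c w" by blast
    then have tk: "t \<in> {1..k}" using rng by blast
    have "\<exists>w\<in>color_class G c t. w = x \<or> adj G x w" using w by (auto simp: color_class_def)
    then show "t \<in> {t\<in>{1..k}. setdist G x (color_class G c t) \<le> 1}"
      using setdist_le1_iff[OF assms(1) C[OF tk] x] tk by blast
  next
    fix t assume "t \<in> {t\<in>{1..k}. setdist G x (color_class G c t) \<le> 1}"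
    then have tk: "t \<in> {1..k}" and "setdist G x (color_class G c t) \<le> 1" by auto
    then obtain w where "w \<in> color_class G c t" "w = x \<or> adj G x w"
      using setdist_le1_iff[OF assms(1) C[OF tk] x] by blast
    then show "t \<in> c ` {w\<in>verts G. w = x \<or> adj G x w}" by (auto simp: color_class_def)
  qed
  show ?thesis using cuv N[OF assms(4)] N[OF assms(5)] eq by auto
qed



abbreviation SG :: "nat \<Rightarrow> (nat + nat \<times> unit) graph" where
  "SG n \<equiv> corona (star n) compl_K1"

lemma verts_SG: "verts (SG n) = Inl ` {..<n} \<union> (\<lambda>i. Inr (i,())) ` {..<n}"
  by (auto simp: corona_def verts_def star_def compl_K1_def)

lemma in_verts_SG: "x \<in> verts (SG n) \<longleftrightarrow> (\<exists>i<n. x = Inl i \<or> x = Inr (i,()))"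
  unfolding verts_SG by auto

lemma adj_SG: "adj (SG n) x y \<longleftrightarrow>
   (\<exists>j. 0 < j \<and> j < n \<and> (x = Inl 0 \<and> y = Inl j \<or> x = Inl j \<and> y = Inl 0)) \<or>
   (\<exists>i<n. x = Inl i \<and> y = Inr (i,()) \<or> x = Inr (i,()) \<and> y = Inl i)"
  by (cases x; cases y) (auto simp: corona_def adj_def verts_def star_def compl_K1_def)

lemma finite_SG: "finite (verts (SG n))" unfolding verts_SG by auto

lemma conn_SG: assumes "n \<ge> 1" shows "conn (SG n)"
proof (rule walk_conn_center[where z = "Inl 0"])
  show "adj (SG n) x y \<Longrightarrow> adj (SG n) y x" for x y unfolding adj_SG by blast
next
  fix v assume v: "v \<in> verts (SG n)"
  then obtain i where i: "i < n" "v = Inl i \<or> v = Inr (i,())" unfolding in_verts_SG by blast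
  have c: "Inl 0 \<in> verts (SG n)" using assms unfolding in_verts_SG by auto
  show "\<exists>xs. is_walk (SG n) xs \<and> hd xs = Inl 0 \<and> last xs = v"
  proof (cases "i = 0")
    case True
    show ?thesis using i(2)
      apply (elim disjE)
       apply (rule exI[of _ "[Inl 0]"], use True c in \<open>auto simp: is_walk_succ\<close>)
      apply (rule exI[of _ "[Inl 0, Inr (0,())]"], use True i c in \<open>auto simp: is_walk_succ in_verts_SG adj_SG\<close>)
      done
  next
    case False
    show ?thesis using i(2)
      apply (elim disjE)
       apply (rule exI[of _ "[Inl 0, Inl i]"], use False i c in \<open>auto simp: is_walk_succ in_verts_SG adj_SG\<close>)
      apply (rule exI[of _ "[Inl 0, Inl i, Inr (i,())]"], use False i c in \<open>auto simp: is_walk_succ in_verts_SG adj_SG\<close>)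
      done
  qed
qed



definition swp :: "nat \<Rightarrow> nat \<Rightarrow> nat \<Rightarrow> nat" where
  "swp i j a = (if a = i then j else if a = j then i else a)"

definition sig :: "nat \<Rightarrow> nat \<Rightarrow> nat + nat \<times> unit \<Rightarrow> nat + nat \<times> unit" where
  "sig i j x = (case x of Inl a \<Rightarrow> Inl (swp i j a) | Inr (a,u) \<Rightarrow> Inr (swp i j a, u))"

definition tau :: "nat \<Rightarrow> nat + nat \<times> unit \<Rightarrow> nat + nat \<times> unit" where
  "tau j x = (if x = Inl j then Inr (0,()) else if x = Inr (0,()) then Inl j
      else if x = Inr (j,()) then Inl 0 else x)"

lemma ghom_sig: assumes "0 < i" "i < n" "0 < j" "j < n" shows "ghom (SG n) (sig i j)"
  unfolding ghom_def
proof (intro conjI ballI impI subsetI)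
  fix x assume "x \<in> sig i j ` verts (SG n)"
  then show "x \<in> verts (SG n)" using assms by (auto simp: in_verts_SG sig_def swp_def)
next
  fix x y assume "x \<in> verts (SG n)" "y \<in> verts (SG n)" "adj (SG n) x y"
  then show "adj (SG n) (sig i j x) (sig i j y)"
    unfolding adj_SG using assms by (auto simp: sig_def swp_def split: if_splits)
qed

lemma ghom_tau: assumes "0 < j" "j < n" shows "ghom (SG n) (tau j)"
  unfolding ghom_def
proof (intro conjI ballI impI subsetI)
  fix x assume "x \<in> tau j ` verts (SG n)"
  then show "x \<in> verts (SG n)" using assms by (auto simp: in_verts_SG tau_def)
next
  fix x y assume "x \<in> verts (SG n)" "y \<in> verts (SG n)" "adj (SG n) x y"
  then show "adj (SG n) (tau j x) (tau j y)"
    unfolding adj_SG using assms by (auto simp: tau_def)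
qed



lemma lower:
  assumes n1: "n \<ge> 1" and lc: "locating_coloring (SG n) k c"
  shows "n \<le> (k-1)*(k-1)"
proof -
  have col: "is_coloring (SG n) k c" and inj: "inj_on (color_code (SG n) k c) (verts (SG n))"
    using lc by (auto simp: locating_coloring_def)
  have rng: "c x \<in> {1..k}" if "x \<in> verts (SG n)" for x
    using col that by (auto simp: is_coloring_def)
  have prp: "c x \<noteq> c y" if "x \<in> verts (SG n)" "y \<in> verts (SG n)" "adj (SG n) x y" for x y
    using col that by (auto simp: is_coloring_def)
  have cn: "conn (SG n)" using conn_SG n1 .
  define f where "f i = (if i = 0 then (c (Inr (0,())), c (Inl 0)) else (c (Inl i), c (Inr (i,()))))" for i
  define P where "P = Sigma ({1..k} - {c (Inl 0)}) (\<lambda>x. {1..k} - {x})"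
  have V0: "Inl 0 \<in> verts (SG n)" "Inr (0,()) \<in> verts (SG n)" using n1 by (auto simp: in_verts_SG)
  have sub: "f ` {..<n} \<subseteq> P"
  proof
    fix p assume "p \<in> f ` {..<n}"
    then obtain i where i: "i < n" "p = f i" by blast
    show "p \<in> P"
    proof (cases "i = 0")
      case True
      have "c (Inr (0,())) \<noteq> c (Inl 0)" using prp[OF V0(2) V0(1)] n1 by (auto simp: adj_SG)
      then show ?thesis using True i rng V0 by (auto simp: f_def P_def)
    next
      case False
      have Vi: "Inl i \<in> verts (SG n)" "Inr (i,()) \<in> verts (SG n)" using i by (auto simp: in_verts_SG)
      have "c (Inl i) \<noteq> c (Inl 0)" using prp[OF Vi(1) V0(1)] False i by (auto simp: adj_SG)
      moreover have "c (Inr (i,())) \<noteq> c (Inl i)" using prp[OF Vi(2) Vi(1)] i by (auto simp: adj_SG)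
      ultimately show ?thesis using False i rng Vi by (auto simp: f_def P_def)
    qed
  qed
  have key: False if ij: "0 < i" "i < n" "j < n" "i \<noteq> j" "f i = f j" for i j
  proof (cases "j = 0")
    case True
    have e: "c (Inl i) = c (Inr (0,()))" "c (Inr (i,())) = c (Inl 0)"
      using ij True by (auto simp: f_def)
    have Vi: "Inl i \<in> verts (SG n)" using ij by (auto simp: in_verts_SG)
    have cp: "\<forall>x\<in>verts (SG n). c (tau i x) = c x" using e by (auto simp: tau_def)
    have "color_code (SG n) k c (Inl i) = color_code (SG n) k c (Inr (0,()))"
      by (rule codes_eq[OF cn finite_SG col ghom_tau ghom_tau cp cp _ _ Vi V0(2)])
         (use ij in \<open>auto simp: tau_def\<close>)
    then show False using inj Vi V0(2) by (auto dest: inj_onD)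
  next
    case False
    have e: "c (Inl i) = c (Inl j)" "c (Inr (i,())) = c (Inr (j,()))"
      using ij False by (auto simp: f_def)
    have Vi: "Inl i \<in> verts (SG n)" "Inl j \<in> verts (SG n)" using ij by (auto simp: in_verts_SG)
    have cp: "\<forall>x\<in>verts (SG n). c (sig i j x) = c x" using e by (auto simp: sig_def swp_def in_verts_SG)
    have "color_code (SG n) k c (Inl i) = color_code (SG n) k c (Inl j)"
      by (rule codes_eq[OF cn finite_SG col ghom_sig ghom_sig cp cp _ _ Vi])
         (use ij False in \<open>auto simp: sig_def swp_def\<close>)
    then show False using inj Vi ij by (auto dest: inj_onD)
  qed
  have "inj_on f {..<n}"
  proof (rule inj_onI)
    fix i j assume "i \<in> {..<n}" "j \<in> {..<n}" "f i = f j"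
    then show "i = j" using key[of i j] key[of j i] by (cases "i = 0"; cases "j = 0") auto
  qed
  then have "n \<le> card P" using card_inj_on_le[OF _ sub] by (auto simp: P_def)
  also have "card P = (k-1)*(k-1)"
  proof -
    have c0: "c (Inl 0) \<in> {1..k}" using rng V0 by blast
    have "card P = (\<Sum>x\<in>{1..k} - {c (Inl 0)}. card ({1..k} - {x}))"
      unfolding P_def by (rule card_SigmaI) auto
    also have "\<dots> = (\<Sum>x\<in>{1..k} - {c (Inl 0)}. k - 1)"
      by (rule sum.cong) auto
    also have "\<dots> = (k-1)*(k-1)" using c0 by simp
    finally show ?thesis .
  qed
  finally show ?thesis .
qed



definition X :: "nat \<Rightarrow> nat \<Rightarrow> nat" where "X m i = 2 + i mod m"
definition Y :: "nat \<Rightarrow> nat \<Rightarrow> nat" where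
  "Y m i = (if i div m + 1 < X m i then i div m + 1 else i div m + 2)"
definition col :: "nat \<Rightarrow> nat + nat \<times> unit \<Rightarrow> nat" where
  "col m x = (case x of Inl i \<Rightarrow> if i = 0 then 1 else X m i | Inr (i,_) \<Rightarrow> if i = 0 then X m 0 else Y m i)"
definition Lv :: "nat \<Rightarrow> nat + nat \<times> unit" where
  "Lv i = (if i = 0 then Inr (0,()) else Inl i)"

lemma X_ge: "X m i \<ge> 2" by (simp add: X_def)
lemma X_le: "0 < m \<Longrightarrow> X m i \<le> m + 1" by (simp add: X_def) (meson Suc_leI mod_less_divisor)
lemma Y_ge: "Y m i \<ge> 1" by (simp add: Y_def)
lemma Y_le: "i < m * m \<Longrightarrow> Y m i \<le> m + 1"
proof -
  assume "i < m*m"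
  then have "i div m < m" by (simp add: less_mult_imp_div_less)
  then show ?thesis by (simp add: Y_def)
qed
lemma XY_ne: "Y m i \<noteq> X m i" by (simp add: Y_def)
lemma XY_ne': "X m i \<noteq> Y m i" using XY_ne by metis
lemma X_ne1: "X m i \<noteq> 1" "1 \<noteq> X m i" using X_ge[of m i] by auto
lemma X_ne1': "X m i \<noteq> Suc 0" "Suc 0 \<noteq> X m i" using X_ge[of m i] by auto
lemma X0: "X m 0 = 2" by (simp add: X_def)
lemma Y0: "Y m 0 = 1" by (simp add: Y_def X_def)

lemma XY_inj:
  assumes "X m i = X m j" "Y m i = Y m j"
  shows "i = j"
proof -
  have md: "i mod m = j mod m" using assms(1) by (simp add: X_def)
  have dv: "i div m = j div m" using assms unfolding Y_def by (auto split: if_splits)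
  show ?thesis using md dv by (metis div_mult_mod_eq)
qed

lemma col_Lv: "col m (Lv i) = X m i" by (simp add: col_def Lv_def X0)
lemma col_P: "0 < i \<Longrightarrow> col m (Inr (i,())) = Y m i" by (simp add: col_def)
lemma col_0: "col m (Inl 0) = 1" by (simp add: col_def)

lemma NC_Lv:
  assumes "i < n"
  shows "col m ` {w\<in>verts (SG n). w = Lv i \<or> adj (SG n) (Lv i) w} = {1, X m i, Y m i}"
proof (cases "i = 0")
  case True
  have "{w\<in>verts (SG n). w = Lv i \<or> adj (SG n) (Lv i) w} = {Inr (0,()), Inl 0}"
    using True assms by (auto simp: Lv_def in_verts_SG adj_SG)
  then show ?thesis using True by (auto simp: col_def X0 Y0)
next
  case False
  have "{w\<in>verts (SG n). w = Lv i \<or> adj (SG n) (Lv i) w} = {Inl i, Inl 0, Inr (i,())}"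
    using False assms by (auto simp: Lv_def in_verts_SG adj_SG)
  then show ?thesis using False by (auto simp: col_def)
qed

lemma NC_P:
  assumes "0 < i" "i < n"
  shows "col m ` {w\<in>verts (SG n). w = Inr (i,()) \<or> adj (SG n) (Inr (i,())) w} = {X m i, Y m i}"
proof -
  have "{w\<in>verts (SG n). w = Inr (i,()) \<or> adj (SG n) (Inr (i,())) w} = {Inr (i,()), Inl i}"
    using assms by (auto simp: in_verts_SG adj_SG)
  then show ?thesis using assms by (auto simp: col_def)
qed

lemma NC_0:
  assumes "2 \<le> m" "1 < n"
  shows "{1, 2, 3} \<subseteq> col m ` {w\<in>verts (SG n). w = Inl 0 \<or> adj (SG n) (Inl 0) w}"
proof -
  have "{Inl 0, Inr (0,()), Inl 1} \<subseteq> {w\<in>verts (SG n). w = Inl 0 \<or> adj (SG n) (Inl 0) w}"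
    using assms by (auto simp: in_verts_SG adj_SG)
  moreover have "col m (Inl 1) = 3" using assms by (simp add: col_def X_def)
  ultimately show ?thesis by (force simp: col_def X0)
qed

lemma vert_cases:
  assumes "x \<in> verts (SG n)"
  shows "x = Inl 0 \<or> (\<exists>i<n. x = Lv i) \<or> (\<exists>i. 0 < i \<and> i < n \<and> x = Inr (i,()))"
  using assms unfolding in_verts_SG Lv_def by (metis neq0_conv)

lemma upper:
  assumes m2: "2 \<le> m" and mn: "m \<le> n" and nm: "n \<le> m * m"
  shows "locating_coloring (SG n) (m+1) (col m)"
proof -
  have n1: "1 < n" using m2 mn by simp
  have m0: "0 < m" using m2 by simp
  have rng: "col m x \<in> {1..m+1}" if xV: "x \<in> verts (SG n)" for x
  proof -
    obtain i where i: "i < n" "x = Inl i \<or> x = Inr (i,())" using xV unfolding in_verts_SG by blast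
    have "i < m*m" using i nm by simp
    then show ?thesis using i X_le[OF m0, of i] X_ge[of m i] Y_ge[of m i] Y_le[of i m]
      by (auto simp: col_def X0)
  qed
  have surj: "t \<in> col m ` verts (SG n)" if t: "t \<in> {1..m+1}" for t
  proof -
    have "t = 1 \<or> t = 2 \<or> 3 \<le> t" using t by auto
    then consider "t = 1" | "t = 2" | "3 \<le> t" by blast
    then show ?thesis
    proof cases
      case 1
      have "col m (Inl 0) = t" using 1 by (simp add: col_def)
      moreover have "Inl 0 \<in> verts (SG n)" using n1 by (auto simp: in_verts_SG)
      ultimately show ?thesis by force
    next
      case 2
      have "col m (Inr (0,())) = t" using 2 by (simp add: col_def X0)
      moreover have "Inr (0,()) \<in> verts (SG n)" using n1 by (auto simp: in_verts_SG)
      ultimately show ?thesis by force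
    next
      case 3
      have "t - 2 < m" using t 3 by auto
      then have "col m (Inl (t-2)) = t" using 3 by (simp add: col_def X_def)
      moreover have "Inl (t-2) \<in> verts (SG n)" using \<open>t - 2 < m\<close> mn by (auto simp: in_verts_SG)
      ultimately show ?thesis by force
    qed
  qed
  have iscol: "is_coloring (SG n) (m+1) (col m)"
    unfolding is_coloring_def
  proof (intro conjI ballI impI)
    show "col m ` verts (SG n) = {1..m+1}" using rng surj by blast
  next
    fix u v assume "u \<in> verts (SG n)" "v \<in> verts (SG n)" "adj (SG n) u v"
    then show "col m u \<noteq> col m v"
      unfolding adj_SG by (auto simp: col_def X0 X_ne1 X_ne1' XY_ne XY_ne' split: if_splits)
  qed
  have cn: "conn (SG n)" using n1 by (intro conn_SG) simp
  let ?N = "\<lambda>u. col m ` {w\<in>verts (SG n). w = u \<or> adj (SG n) u w}"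
  have main: "u = v" if u: "u \<in> verts (SG n)" and v: "v \<in> verts (SG n)"
     and e: "col m u = col m v" "?N u = ?N v" for u v
  proof -
    have LL: "i = j" if "i < n" "j < n" "X m i = X m j" "{1, X m i, Y m i} = {1, X m j, Y m j}" for i j
    proof -
      have yi: "Y m i \<in> {1, X m j, Y m j}" using that(4) by blast
      have yj: "Y m j \<in> {1, X m i, Y m i}" using that(4) by blast
      have "Y m i = Y m j"
      proof (cases "Y m i = 1")
        case True
        then show ?thesis using yj that(3) XY_ne[of m j] by auto
      next
        case False
        then show ?thesis using yi that(3) XY_ne[of m i] by auto
      qed
      then show ?thesis using XY_inj that(3) by blast
    qed
    have LP: False if "X m i = Y m j" "{1, X m i, Y m i} = {X m j, Y m j}" for i j
    proof -
      have "1 \<in> {X m j, Y m j}" using that(2) by blast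
      then have "Y m j = 1" using X_ne1[of m j] by auto
      then show False using that(1) X_ne1[of m i] by simp
    qed
    have L0: False if "X m i = 1" for i using that X_ge[of m i] by simp
    have PP: "i = j" if "Y m i = Y m j" "{X m i, Y m i} = {X m j, Y m j}" for i j
    proof -
      have "X m i = X m j" using that XY_ne[of m i] XY_ne[of m j] by (metis doubleton_eq_iff)
      then show ?thesis using XY_inj that(1) by blast
    qed
    have P0: False if "{1,2,3} \<subseteq> {X m i, Y m i}" for i
      using that by auto
    have N0: "{1,2,3} \<subseteq> ?N (Inl 0)" using NC_0[OF m2 n1] .
    consider "u = Inl 0" | i where "i < n" "u = Lv i" | i where "0 < i" "i < n" "u = Inr (i,())"
      using vert_cases[OF u] by blast
    then show ?thesis
    proof cases
      case 1
      consider "v = Inl 0" | j where "j < n" "v = Lv j" | j where "0 < j" "j < n" "v = Inr (j,())"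
        using vert_cases[OF v] by blast
      then show ?thesis
      proof cases
        case 1 then show ?thesis using \<open>u = Inl 0\<close> by simp
      next
        case 2 then show ?thesis using e(1)[unfolded \<open>u = Inl 0\<close> \<open>v = Lv j\<close> col_Lv col_0] L0 by metis
      next
        case 3
        have "{1,2,3} \<subseteq> {X m j, Y m j}"
          using N0 unfolding e(2)[unfolded \<open>u = Inl 0\<close> \<open>v = Inr (j,())\<close> NC_P[OF 3(1,2)]] .
        then show ?thesis using P0 by blast
      qed
    next
      case (2 i)
      consider "v = Inl 0" | j where "j < n" "v = Lv j" | j where "0 < j" "j < n" "v = Inr (j,())"
        using vert_cases[OF v] by blast
      then show ?thesis
      proof cases
        case 1 then show ?thesis using e(1)[unfolded \<open>u = Lv i\<close> \<open>v = Inl 0\<close> col_Lv col_0] L0 by metis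
      next
        case (2 j)
        have "X m i = X m j" using e(1) \<open>u = Lv i\<close> 2 by (simp add: col_Lv)
        moreover have "{1, X m i, Y m i} = {1, X m j, Y m j}"
          using e(2)[unfolded \<open>u = Lv i\<close> \<open>v = Lv j\<close> NC_Lv[OF \<open>i < n\<close>] NC_Lv[OF 2(1)]] .
        ultimately have "i = j" using LL \<open>i < n\<close> 2 by blast
        then show ?thesis using \<open>u = Lv i\<close> 2 by simp
      next
        case (3 j)
        have "X m i = Y m j" using e(1) \<open>u = Lv i\<close> 3 by (simp add: col_Lv col_P)
        moreover have "{1, X m i, Y m i} = {X m j, Y m j}"
          using e(2)[unfolded \<open>u = Lv i\<close> \<open>v = Inr (j,())\<close> NC_Lv[OF \<open>i < n\<close>] NC_P[OF 3(1,2)]] .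
        ultimately show ?thesis using LP by blast
      qed
    next
      case (3 i)
      consider "v = Inl 0" | j where "j < n" "v = Lv j" | j where "0 < j" "j < n" "v = Inr (j,())"
        using vert_cases[OF v] by blast
      then show ?thesis
      proof cases
        case 1
        have "{1,2,3} \<subseteq> {X m i, Y m i}"
          using N0 unfolding e(2)[unfolded \<open>u = Inr (i,())\<close> \<open>v = Inl 0\<close> NC_P[OF 3(1,2)], symmetric] .
        then show ?thesis using P0 by blast
      next
        case (2 j)
        have "X m j = Y m i" using e(1) \<open>u = Inr (i,())\<close> 3 2 by (simp add: col_Lv col_P)
        moreover have "{1, X m j, Y m j} = {X m i, Y m i}"
          using e(2)[unfolded \<open>u = Inr (i,())\<close> \<open>v = Lv j\<close> NC_Lv[OF 2(1)] NC_P[OF 3(1,2)], symmetric] .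
        ultimately show ?thesis using LP by blast
      next
        case (3 j)
        have "Y m i = Y m j" using e(1) \<open>u = Inr (i,())\<close> \<open>0 < i\<close> 3 by (simp add: col_P)
        moreover have "{X m i, Y m i} = {X m j, Y m j}"
          using e(2)[unfolded \<open>u = Inr (i,())\<close> \<open>v = Inr (j,())\<close> NC_P[OF \<open>0 < i\<close> \<open>i < n\<close>] NC_P[OF 3(1,2)]] .
        ultimately have "i = j" using PP by blast
        then show ?thesis using \<open>u = Inr (i,())\<close> 3 by simp
      qed
    qed
  qed
  have "inj_on (color_code (SG n) (m+1) (col m)) (verts (SG n))"
  proof (rule inj_onI)
    fix u v assume "u \<in> verts (SG n)" "v \<in> verts (SG n)"
      "color_code (SG n) (m+1) (col m) u = color_code (SG n) (m+1) (col m) v"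
    then have "col m u = col m v \<and> ?N u = ?N v" by (intro codes_eq_imp[OF cn finite_SG iscol])
    then show "u = v" using main \<open>u \<in> verts (SG n)\<close> \<open>v \<in> verts (SG n)\<close> by simp
  qed
  then show ?thesis using iscol by (simp add: locating_coloring_def)
qed



lemma sq_facts:
  fixes n :: nat
  assumes "n \<ge> 4"
  defines "m \<equiv> nat \<lceil>sqrt (real n)\<rceil>"
  shows "n \<le> m * m" "2 \<le> m" "m \<le> n" "\<And>k. n \<le> k * k \<Longrightarrow> m \<le> k"
proof -
  have s0: "sqrt (real n) \<ge> 0" by simp
  have rm: "real m = real_of_int \<lceil>sqrt (real n)\<rceil>" unfolding m_def using s0
    by (simp add: ceiling_le_zero)
  have sm: "sqrt (real n) \<le> real m" unfolding rm by (rule le_of_int_ceiling)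
  have "real n = sqrt (real n) * sqrt (real n)" by simp
  also have "\<dots> \<le> real m * real m" using sm s0 by (intro mult_mono) auto
  finally show "n \<le> m * m" by (simp flip: of_nat_mult)
  have "2 \<le> sqrt (real n)" using assms(1) by (intro real_le_rsqrt) (simp add: power2_eq_square)
  then show "2 \<le> m" using sm by linarith
  have "sqrt (real n) \<le> real n / 2"
  proof (rule real_le_lsqrt)
    show "0 \<le> real n / 2" by simp
    show "real n \<le> (real n / 2)^2" using assms(1) by (simp add: power2_eq_square field_simps)
  qed
  moreover have "real m < sqrt (real n) + 1" unfolding rm by linarith
  ultimately have "real m < real n / 2 + 1" by linarith
  then show "m \<le> n" using assms(1) by linarith
  fix k assume "n \<le> k * k"
  then have "real n \<le> real k * real k" by (simp flip: of_nat_mult)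
  then have "sqrt (real n) \<le> real k" by (simp add: real_le_lsqrt power2_eq_square)
  then have "\<lceil>sqrt (real n)\<rceil> \<le> int k" by (intro ceiling_le) simp
  then show "m \<le> k" unfolding m_def by (simp only: nat_le_iff)
qed

theorem theorem8:
  fixes n :: nat
  assumes "n \<ge> 4"
  shows "locating_chromatic_number (corona (star n) compl_K1) = nat \<lceil>sqrt (real n)\<rceil> + 1"
proof -
  define m where "m = nat \<lceil>sqrt (real n)\<rceil>"
  note f = sq_facts[OF assms, folded m_def]
  show ?thesis
    unfolding locating_chromatic_number_def m_def[symmetric]
  proof (rule Least_equality)
    show "\<exists>c. locating_coloring (SG n) (m + 1) c" using upper[OF f(2,3,1)] by blast
  next
    fix k assume "\<exists>c. locating_coloring (SG n) k c"
    then obtain c where "locating_coloring (SG n) k c" by blast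
    then have "n \<le> (k-1)*(k-1)" using lower assms by simp
    then have "m \<le> k - 1" using f(4) by blast
    moreover have "k \<noteq> 0" using \<open>n \<le> (k-1)*(k-1)\<close> assms by (cases k) auto
    ultimately show "m + 1 \<le> k" by simp
  qed
qed


end
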